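(* Let $\mathcal R$ be a nonzero commutative ring. Then $\mathcal R[[Y]]^{W^v}=\mathcal R[Y]^{W^v}$ (i.e. every $W^v$-invariant element of the Looijenga algebra has finite support) if and only if $W^v$ is finite.
   Context: $I$ finite, $A$ a generalized Cartan matrix; $X,Y$ dual free $\mathbb Z$-modules of finite rank with free families $(\alpha_i)\subset X$, $(\alpha_i^\vee)\subset Y$, $\alpha_j(\alpha_i^\vee)=a_{i,j}$; $\mathbb A=Y\otimes\mathbb R$; $r_i(v)=v-\alpha_i(v)\alpha_i^\vee$; $W^v=\langle r_i\rangle$; $Q^\vee_+=\bigoplus\mathbb N\alpha_i^\vee$, $x\le_{Q^\vee}y$ iff $y-x\in Q^\vee_+$. A set $E\subset Y$ is almost finite if there is a finite $J\subset Y$ with every element of $E$ $\le_{Q^\vee}$ some element of $J$. $\mathcal R[[Y]]$ is the set of formal series $\sum_{\lambda\in Y}a_\lambda e^\lambda$ with almost finite support ($e^\lambda e^\mu=e^{\lambda+\mu}$), $\mathcal R[Y]$ its subalgebra of finitely supported elements, and the superscript $W^v$ denotes elements with $a_{w(\lambda)}=a_\lambda$ for all $w\in W^v$. *)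

theory Defs
  imports Main
begin

text \<open>The lattice Y (a free Z-module of finite rank) is modelled as
  Y = Z^D for a finite coordinate set D, i.e. integer functions supported in D.
  Its dual X is modelled the same way, with the perfect pairing given by
  the dot product over D.\<close>

definition lat :: "'d set \<Rightarrow> ('d \<Rightarrow> int) set" where
  "lat D = {y. \<forall>k. k \<notin> D \<longrightarrow> y k = 0}"

definition pair :: "'d set \<Rightarrow> ('d \<Rightarrow> int) \<Rightarrow> ('d \<Rightarrow> int) \<Rightarrow> int" where
  "pair D x y = (\<Sum>k\<in>D. x k * y k)"

definition free_family :: "'i set \<Rightarrow> ('i \<Rightarrow> 'd \<Rightarrow> int) \<Rightarrow> bool" where
  "free_family I v = (\<forall>c :: 'i \<Rightarrow> int.
      (\<lambda>k. \<Sum>i\<in>I. c i * v i k) = (\<lambda>k. 0) \<longrightarrow> (\<forall>i\<in>I. c i = 0))"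

definition gen_cartan :: "'i set \<Rightarrow> ('i \<Rightarrow> 'i \<Rightarrow> int) \<Rightarrow> bool" where
  "gen_cartan I a = ((\<forall>i\<in>I. a i i = 2) \<and>
      (\<forall>i\<in>I. \<forall>j\<in>I. i \<noteq> j \<longrightarrow> a i j \<le> 0) \<and>
      (\<forall>i\<in>I. \<forall>j\<in>I. a i j = 0 \<longleftrightarrow> a j i = 0))"

definition refl :: "'d set \<Rightarrow> ('i \<Rightarrow> 'd \<Rightarrow> int) \<Rightarrow> ('i \<Rightarrow> 'd \<Rightarrow> int) \<Rightarrow> 'i
    \<Rightarrow> ('d \<Rightarrow> int) \<Rightarrow> ('d \<Rightarrow> int)" where
  "refl D al cal i v = (\<lambda>k. v k - pair D (al i) v * cal i k)"

text \<open>The vectorial Weyl group W^v generated by the r_i (as maps on Y; since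
  each r_i is an involution, the monoid generated equals the group generated).\<close>
inductive_set weyl :: "'d set \<Rightarrow> 'i set \<Rightarrow> ('i \<Rightarrow> 'd \<Rightarrow> int) \<Rightarrow> ('i \<Rightarrow> 'd \<Rightarrow> int)
    \<Rightarrow> (('d \<Rightarrow> int) \<Rightarrow> ('d \<Rightarrow> int)) set"
  for D I al cal where
  weyl_id: "(\<lambda>v. if v \<in> lat D then v else undefined) \<in> weyl D I al cal"
| weyl_step: "w \<in> weyl D I al cal \<Longrightarrow> i \<in> I \<Longrightarrow>
     (\<lambda>v. if v \<in> lat D then refl D al cal i (w v) else undefined) \<in> weyl D I al cal"

definition Qplus :: "'i set \<Rightarrow> ('i \<Rightarrow> 'd \<Rightarrow> int) \<Rightarrow> ('d \<Rightarrow> int) set" where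
  "Qplus I cal = {y. \<exists>n :: 'i \<Rightarrow> nat. y = (\<lambda>k. \<Sum>i\<in>I. int (n i) * cal i k)}"

definition leQ :: "'i set \<Rightarrow> ('i \<Rightarrow> 'd \<Rightarrow> int) \<Rightarrow> ('d \<Rightarrow> int) \<Rightarrow> ('d \<Rightarrow> int) \<Rightarrow> bool" where
  "leQ I cal x y = ((y - x) \<in> Qplus I cal)"

definition almost_finite :: "'d set \<Rightarrow> 'i set \<Rightarrow> ('i \<Rightarrow> 'd \<Rightarrow> int) \<Rightarrow> ('d \<Rightarrow> int) set \<Rightarrow> bool" where
  "almost_finite D I cal E = (\<exists>J. finite J \<and> J \<subseteq> lat D \<and> (\<forall>e\<in>E. \<exists>j\<in>J. leQ I cal e j))"

text \<open>Formal series sum a_lambda e^lambda are modelled by their coefficient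
  functions f with f lambda = a_lambda, support contained in Y.\<close>
definition supp :: "(('d \<Rightarrow> int) \<Rightarrow> 'r::zero) \<Rightarrow> ('d \<Rightarrow> int) set" where
  "supp f = {l. f l \<noteq> 0}"

definition looijenga :: "'d set \<Rightarrow> 'i set \<Rightarrow> ('i \<Rightarrow> 'd \<Rightarrow> int)
    \<Rightarrow> ((('d \<Rightarrow> int) \<Rightarrow> 'r::zero)) set" where
  "looijenga D I cal = {f. supp f \<subseteq> lat D \<and> almost_finite D I cal (supp f)}"

definition group_alg :: "'d set \<Rightarrow> ((('d \<Rightarrow> int) \<Rightarrow> 'r::zero)) set" where
  "group_alg D = {f. supp f \<subseteq> lat D \<and> finite (supp f)}"

definition w_inv :: "'d set \<Rightarrow> 'i set \<Rightarrow> ('i \<Rightarrow> 'd \<Rightarrow> int) \<Rightarrow> ('i \<Rightarrow> 'd \<Rightarrow> int)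
    \<Rightarrow> ((('d \<Rightarrow> int) \<Rightarrow> 'r)) set \<Rightarrow> ((('d \<Rightarrow> int) \<Rightarrow> 'r)) set" where
  "w_inv D I al cal S = {f \<in> S. \<forall>w\<in>weyl D I al cal. \<forall>l\<in>lat D. f (w l) = f l}"

end

theory Submission
  imports Defs "HOL-Library.FuncSet" "HOL-Library.Function_Algebras" "Jordan_Normal_Form.Determinant"
begin


definition sc :: "int \<Rightarrow> ('d \<Rightarrow> int) \<Rightarrow> ('d \<Rightarrow> int)" where "sc c v = (\<lambda>k. c * v k)"

lemma pair_add: "pair D x (u + v) = pair D x u + pair D x v"
  by (simp add: pair_def sum.distrib distrib_left)
lemma pair_diff: "pair D x (u - v) = pair D x u - pair D x v"
  by (simp add: pair_def sum_subtractf right_diff_distrib)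
lemma pair_uminus: "pair D x (- v) = - pair D x v"
  by (simp add: pair_def sum_negf)
lemma pair_sc: "pair D x (sc c v) = c * pair D x v"
  by (simp add: pair_def sc_def sum_distrib_left algebra_simps)
lemma pair_sc': "pair D x (\<lambda>k. c * v k) = c * pair D x v"
  using pair_sc[of D x c v] by (simp add: sc_def)
lemma pair_sc'': "pair D x (\<lambda>k. v k * c) = c * pair D x v"
  using pair_sc[of D x c v] by (simp add: sc_def mult.commute)
lemma pair_zero: "pair D x 0 = 0"
  by (simp add: pair_def)
lemma pair_sum: "pair D x (\<lambda>k. \<Sum>j\<in>A. f j k) = (\<Sum>j\<in>A. pair D x (f j))"
  by (simp add: pair_def sum_distrib_left sum.swap[of _ D])

lemma sc_add: "sc c (u + v) = sc c u + sc c v" by (simp add: sc_def fun_eq_iff algebra_simps)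
lemma sc_sc: "sc c (sc d v) = sc (c*d) v" by (simp add: sc_def fun_eq_iff algebra_simps)

locale KM =
  fixes D :: "'d set" and I :: "'i set" and al cal :: "'i \<Rightarrow> 'd \<Rightarrow> int"
  assumes finD: "finite D" and finI: "finite I"
    and al_lat: "\<forall>i\<in>I. al i \<in> lat D" and cal_lat: "\<forall>i\<in>I. cal i \<in> lat D"
    and free_al: "free_family I al" and free_cal: "free_family I cal"
    and gcm: "gen_cartan I (\<lambda>i j. pair D (al j) (cal i))"
begin

abbreviation R where "R \<equiv> refl D al cal"
definition a where "a i j = pair D (al j) (cal i)"

lemma a_ii: "i\<in>I \<Longrightarrow> a i i = 2" using gcm by (simp add: gen_cartan_def a_def)
lemma a_le: "i\<in>I \<Longrightarrow> j\<in>I \<Longrightarrow> i\<noteq>j \<Longrightarrow> a i j \<le> 0" using gcm by (simp add: gen_cartan_def a_def)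
lemma a_0: "i\<in>I \<Longrightarrow> j\<in>I \<Longrightarrow> a i j = 0 \<longleftrightarrow> a j i = 0" using gcm by (simp add: gen_cartan_def a_def)

lemma R_eq: "R i v = v - sc (pair D (al i) v) (cal i)"
  by (auto simp: refl_def sc_def fun_eq_iff)
lemma R_add: "R i (u + v) = R i u + R i v"
  by (simp add: R_eq pair_add sc_def fun_eq_iff algebra_simps)
lemma R_diff: "R i (u - v) = R i u - R i v"
  by (simp add: R_eq pair_diff sc_def fun_eq_iff algebra_simps)
lemma R_uminus: "R i (- v) = - R i v"
  by (simp add: R_eq pair_uminus sc_def fun_eq_iff algebra_simps)
lemma R_sc: "R i (sc c v) = sc c (R i v)"
  by (simp add: R_eq pair_sc pair_sc' pair_sc'' sc_def fun_eq_iff algebra_simps)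
lemma R_zero: "R i 0 = 0"
  by (simp add: R_eq pair_zero sc_def fun_eq_iff)
lemma RR: "i \<in> I \<Longrightarrow> R i (R i v) = v"
proof -
  assume i: "i \<in> I"
  have "pair D (al i) (cal i) = 2" using a_ii[OF i] by (simp add: a_def)
  then show ?thesis
    by (simp add: R_eq pair_diff pair_sc pair_sc' pair_sc'' sc_def fun_eq_iff algebra_simps)
qed
lemma R_cal: "R i (cal j) = cal j - sc (a j i) (cal i)"
  by (simp add: R_eq a_def)
lemma R_cal_self: "i\<in>I \<Longrightarrow> R i (cal i) = - cal i"
  by (simp add: R_cal a_ii sc_def fun_eq_iff)

fun wm :: "'i list \<Rightarrow> ('d\<Rightarrow>int) \<Rightarrow> ('d\<Rightarrow>int)" where
  "wm [] = id" | "wm (i#ws) = R i \<circ> wm ws"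

lemma wm_append: "wm (xs @ ys) = wm xs \<circ> wm ys"
  by (induction xs) auto
lemma wm_snoc: "wm (xs @ [i]) v = wm xs (R i v)"
  by (simp add: wm_append)
lemma wm_add: "wm ws (u + v) = wm ws u + wm ws v"
  by (induction ws) (simp_all only: wm.simps comp_apply id_apply R_add)
lemma wm_diff: "wm ws (u - v) = wm ws u - wm ws v"
  by (induction ws) (simp_all only: wm.simps comp_apply id_apply R_diff)
lemma wm_uminus: "wm ws (- v) = - wm ws v"
  by (induction ws) (simp_all only: wm.simps comp_apply id_apply R_uminus)
lemma wm_sc: "wm ws (sc c v) = sc c (wm ws v)"
  by (induction ws) (simp_all only: wm.simps comp_apply id_apply R_sc)
lemma wm_zero: "wm ws 0 = 0"
  by (induction ws) (simp_all only: wm.simps comp_apply id_apply R_zero)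
lemma wm_rev1: "set ws \<subseteq> I \<Longrightarrow> wm (rev ws) (wm ws v) = v"
  by (induction ws arbitrary: v) (auto simp: wm_snoc RR)
lemma wm_rev2: "set ws \<subseteq> I \<Longrightarrow> wm ws (wm (rev ws) v) = v"
  using wm_rev1[of "rev ws"] by simp

definition lc :: "('i \<Rightarrow> int) \<Rightarrow> ('d \<Rightarrow> int)" where
  "lc n = (\<lambda>k. \<Sum>i\<in>I. n i * cal i k)"

lemma lc_free: "lc n = lc m \<Longrightarrow> i \<in> I \<Longrightarrow> n i = m i"
proof -
  assume h: "lc n = lc m" and i: "i \<in> I"
  have "(\<lambda>k. \<Sum>j\<in>I. (n j - m j) * cal j k) = (\<lambda>k. 0)"
  proof
    fix k
    have "lc n k = lc m k" using h by simp
    then show "(\<Sum>j\<in>I. (n j - m j) * cal j k) = 0"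
      by (simp add: lc_def left_diff_distrib sum_subtractf)
  qed
  moreover have H: "\<forall>c. (\<lambda>k. \<Sum>i\<in>I. c i * cal i k) = (\<lambda>k. 0) \<longrightarrow> (\<forall>i\<in>I. c i = 0)"
    using free_cal unfolding free_family_def by blast
  ultimately have "\<forall>j\<in>I. n j - m j = 0"
    using spec[OF H, of "\<lambda>j. n j - m j"] by simp
  then show ?thesis using i by auto
qed
lemma lc_add: "lc n + lc m = lc (\<lambda>i. n i + m i)"
  by (simp add: lc_def fun_eq_iff sum.distrib distrib_right)
lemma lc_sc: "sc c (lc n) = lc (\<lambda>i. c * n i)"
  by (simp add: lc_def sc_def fun_eq_iff sum_distrib_left algebra_simps)
lemma lc_zero: "lc (\<lambda>i. 0) = 0"
  by (simp add: lc_def fun_eq_iff)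
lemma cal_lc: "s \<in> I \<Longrightarrow> cal s = lc (\<lambda>j. if j = s then 1 else 0)"
proof -
  assume s: "s \<in> I"
  have "(\<Sum>i\<in>I. (if i = s then 1 else 0) * cal i k) = cal s k" for k
  proof -
    have "(\<Sum>i\<in>I. (if i = s then 1 else 0) * cal i k) = (\<Sum>i\<in>I. (if i = s then cal i k else 0))"
      by (rule sum.cong) auto
    also have "\<dots> = cal s k" using finI s by (simp add: sum.delta)
    finally show ?thesis .
  qed
  then show ?thesis by (simp add: lc_def fun_eq_iff)
qed

lemma cal_nz: "s \<in> I \<Longrightarrow> cal s \<noteq> 0"
proof
  assume s: "s \<in> I" and h: "cal s = 0"
  then have "lc (\<lambda>j. if j = s then 1 else 0) = lc (\<lambda>j. 0)" using cal_lc[OF s] lc_zero by simp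
  from lc_free[OF this s] show False by simp
qed

definition pos :: "('d \<Rightarrow> int) \<Rightarrow> bool" where
  "pos b \<longleftrightarrow> (\<exists>n. (\<forall>i\<in>I. 0 \<le> n i) \<and> b = lc n)"

lemma pos_add: "pos u \<Longrightarrow> pos v \<Longrightarrow> pos (u + v)"
proof -
  assume "pos u" "pos v"
  then obtain n m where "\<forall>i\<in>I. 0 \<le> n i" "u = lc n" "\<forall>i\<in>I. 0 \<le> m i" "v = lc m"
    unfolding pos_def by blast
  then show ?thesis unfolding pos_def by (intro exI[of _ "\<lambda>i. n i + m i"]) (auto simp: lc_add)
qed
lemma pos_sc: "0 \<le> c \<Longrightarrow> pos u \<Longrightarrow> pos (sc c u)"
proof -
  assume c: "0 \<le> c" and "pos u"
  then obtain n where "\<forall>i\<in>I. 0 \<le> n i" "u = lc n"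
    unfolding pos_def by blast
  then show ?thesis unfolding pos_def using c by (intro exI[of _ "\<lambda>i. c * n i"]) (auto simp: lc_sc)
qed
lemma pos_cal: "s \<in> I \<Longrightarrow> pos (cal s)"
  unfolding pos_def using cal_lc by (intro exI[of _ "\<lambda>j. if j = s then 1 else 0"]) auto
lemma pos_zero: "pos 0"
  unfolding pos_def using lc_zero by force

end


context KM begin

definition G :: "'i set \<Rightarrow> (('d\<Rightarrow>int)\<Rightarrow>('d\<Rightarrow>int)) set" where "G K = wm ` lists K"
definition len :: "'i set \<Rightarrow> (('d\<Rightarrow>int)\<Rightarrow>('d\<Rightarrow>int)) \<Rightarrow> nat" where
  "len K g = (LEAST n. \<exists>ws\<in>lists K. length ws = n \<and> wm ws = g)"

lemma len_witness: "g \<in> G K \<Longrightarrow> \<exists>ws\<in>lists K. length ws = len K g \<and> wm ws = g"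
proof -
  assume "g \<in> G K"
  then obtain ws where "ws \<in> lists K" "wm ws = g" unfolding G_def by blast
  then have "\<exists>n. \<exists>ws\<in>lists K. length ws = n \<and> wm ws = g" by blast
  from LeastI_ex[OF this] show ?thesis unfolding len_def .
qed
lemma len_le: "ws \<in> lists K \<Longrightarrow> len K (wm ws) \<le> length ws"
  unfolding len_def by (rule Least_le) auto
lemma G_wm: "ws \<in> lists K \<Longrightarrow> wm ws \<in> G K" unfolding G_def by blast
lemma G_comp: "g \<in> G K \<Longrightarrow> h \<in> G K \<Longrightarrow> g \<circ> h \<in> G K"
  unfolding G_def by (auto simp flip: wm_append intro!: imageI)
lemma G_R: "s \<in> K \<Longrightarrow> R s \<in> G K"
  using G_wm[of "[s]" K] by simp
lemma G_id: "id \<in> G K"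
  using G_wm[of "[]" K] by simp
lemma G_mono: "K \<subseteq> K' \<Longrightarrow> g \<in> G K \<Longrightarrow> g \<in> G K'"
  unfolding G_def by (auto intro: lists_mono[THEN subsetD])
lemma len_mono: "K \<subseteq> K' \<Longrightarrow> g \<in> G K \<Longrightarrow> len K' g \<le> len K g"
proof -
  assume K: "K \<subseteq> K'" and g: "g \<in> G K"
  obtain ws where "ws\<in>lists K" "length ws = len K g" "wm ws = g" using len_witness[OF g] by blast
  moreover have "ws \<in> lists K'" using K \<open>ws\<in>lists K\<close> lists_mono by blast
  ultimately show ?thesis using len_le[of ws K'] by simp
qed
lemma len_comp: "g \<in> G K \<Longrightarrow> h \<in> G K \<Longrightarrow> len K (g \<circ> h) \<le> len K g + len K h"
proof -
  assume g: "g \<in> G K" and h: "h \<in> G K"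
  obtain ws where ws: "ws\<in>lists K" "length ws = len K g" "wm ws = g" using len_witness[OF g] by blast
  obtain vs where vs: "vs\<in>lists K" "length vs = len K h" "wm vs = h" using len_witness[OF h] by blast
  have "g \<circ> h = wm (ws @ vs)" using ws vs by (simp add: wm_append)
  moreover have "ws @ vs \<in> lists K" using ws vs by simp
  ultimately show ?thesis using len_le[of "ws@vs" K] ws vs by simp
qed
lemma len_R: "s \<in> K \<Longrightarrow> len K (R s) \<le> 1"
  using len_le[of "[s]" K] by simp
lemma len_0: "g \<in> G K \<Longrightarrow> len K g = 0 \<Longrightarrow> g = id"
  using len_witness[of g K] by auto
lemma RR_comp: "s \<in> I \<Longrightarrow> R s \<circ> R s = id"
  by (simp add: fun_eq_iff RR)

lemma G_lin: "g \<in> G K \<Longrightarrow> g (u + v) = g u + g v \<and> g (sc c u) = sc c (g u) \<and> g (u - v) = g u - g v"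
  unfolding G_def using wm_add wm_sc wm_diff by blast

lemma R_ne_id: "s \<in> I \<Longrightarrow> R s \<noteq> id"
proof
  assume s: "s \<in> I" and h: "R s = id"
  then have "- cal s = cal s" using R_cal_self[OF s] by (metis id_apply)
  then have "- cal s k = cal s k" for k by (metis uminus_apply)
  then have "cal s = 0" by (simp add: fun_eq_iff)
  then show False using cal_nz[OF s] by simp
qed

end


fun alt :: "'a \<Rightarrow> 'a \<Rightarrow> nat \<Rightarrow> 'a list" where
  "alt x y 0 = []" | "alt x y (Suc k) = (if even k then y else x) # alt x y k"

lemma alt_numeral[simp]: "alt x y (numeral n) = (if even (pred_numeral n) then y else x) # alt x y (pred_numeral n)"
  by (simp add: numeral_eq_Suc)

lemma alt_set: "set (alt x y k) \<subseteq> {x,y}" by (induction k) auto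
lemma alt_length[simp]: "length (alt x y k) = k" by (induction k) auto
lemma alt_add: "\<exists>P. length P = n \<and> alt x y (n + m) = P @ alt x y m"
proof (induction n)
  case 0 then show ?case by simp
next
  case (Suc n)
  then obtain P where "length P = n" "alt x y (n + m) = P @ alt x y m" by blast
  then show ?case by (intro exI[of _ "(if even (n+m) then y else x) # P"]) simp
qed
lemma alt_snoc: "0 < k \<Longrightarrow> \<exists>P. length P = k - 1 \<and> alt x y k = P @ [y]"
  using alt_add[of "k - 1" x y 1] by simp

definition altok :: "'a list \<Rightarrow> bool" where
  "altok ws \<longleftrightarrow> (\<forall>i. Suc i < length ws \<longrightarrow> ws!i \<noteq> ws!Suc i)"

lemma alt_char: "x \<noteq> y \<Longrightarrow> set ws \<subseteq> {x,y} \<Longrightarrow> altok ws \<Longrightarrow> (ws \<noteq> [] \<longrightarrow> last ws = y)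
   \<Longrightarrow> ws = alt x y (length ws)"
proof (induction ws)
  case Nil then show ?case by simp
next
  case (Cons t ws)
  show ?case
  proof (cases "ws = []")
    case True then show ?thesis using Cons.prems by simp
  next
    case False
    have ok: "altok ws" using Cons.prems(3) unfolding altok_def
      by (metis Suc_less_eq length_Cons nth_Cons_Suc)
    have IH: "ws = alt x y (length ws)" using Cons False ok by simp
    have ne: "t \<noteq> ws ! 0" using Cons.prems(3) False unfolding altok_def
      by (metis length_Cons length_greater_0_conv nth_Cons_0 nth_Cons_Suc Suc_mono)
    obtain n where n: "length ws = Suc n" using False by (cases ws) auto
    have "ws ! 0 = (if even n then y else x)" using IH n by (metis alt.simps(2) nth_Cons_0)
    then have "t = (if even (Suc n) then y else x)" using ne Cons.prems(2) by auto
    then show ?thesis using IH n by simp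
  qed
qed

locale KM2 = KM D I al cal for D :: "'d set" and I :: "'i set" and al cal :: "'i \<Rightarrow> 'd \<Rightarrow> int" + fixes s s' :: 'i assumes sI: "s \<in> I" and s'I: "s' \<in> I" and ss': "s \<noteq> s'"
begin

definition "c = - a s s'"
definition "d = - a s' s"
definition vv :: "('d\<Rightarrow>int) \<Rightarrow> int \<Rightarrow> int \<Rightarrow> ('d\<Rightarrow>int)" where
  "vv v X Y = v + sc X (cal s) + sc Y (cal s')"
definition step :: "int \<Rightarrow> int \<Rightarrow> 'i \<Rightarrow> int\<times>int \<Rightarrow> int\<times>int" where
  "step p q t xy = (if t = s then (d * snd xy - fst xy - p, snd xy) else (fst xy, c * fst xy - snd xy - q))"
fun st :: "int \<Rightarrow> int \<Rightarrow> 'i list \<Rightarrow> int\<times>int \<Rightarrow> int\<times>int" where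
  "st p q [] xy = xy" | "st p q (t#ws) xy = step p q t (st p q ws xy)"

lemma c_nn: "0 \<le> c" using a_le[OF sI s'I ss'] by (simp add: c_def)
lemma d_nn: "0 \<le> d" using a_le[OF s'I sI] ss' by (simp add: d_def)
lemma cd0: "c = 0 \<longleftrightarrow> d = 0" using a_0[OF sI s'I] by (simp add: c_def d_def)

lemma R_vv: "t \<in> {s,s'} \<Longrightarrow> R t (vv v X Y) =
   vv v (fst (step (pair D (al s) v) (pair D (al s') v) t (X,Y))) (snd (step (pair D (al s) v) (pair D (al s') v) t (X,Y)))"
proof -
  assume t: "t \<in> {s,s'}"
  have pa: "pair D (al t) (vv v X Y) = pair D (al t) v + X * a s t + Y * a s' t"
    by (simp add: vv_def pair_add pair_sc a_def)
  show ?thesis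
  proof (cases "t = s")
    case True
    then show ?thesis using pa a_ii[OF sI]
      by (simp add: R_eq step_def vv_def sc_def fun_eq_iff algebra_simps d_def)
  next
    case False
    then have "t = s'" using t by simp
    then show ?thesis using pa a_ii[OF s'I] ss'
      by (simp add: R_eq step_def vv_def sc_def fun_eq_iff algebra_simps c_def)
  qed
qed

lemma st_wm: "set ws \<subseteq> {s,s'} \<Longrightarrow> wm ws (vv v X Y) =
   vv v (fst (st (pair D (al s) v) (pair D (al s') v) ws (X,Y))) (snd (st (pair D (al s) v) (pair D (al s') v) ws (X,Y)))"
proof (induction ws)
  case Nil then show ?case by simp
next
  case (Cons t ws)
  then have "wm (t#ws) (vv v X Y) = R t (vv v (fst (st (pair D (al s) v) (pair D (al s') v) ws (X,Y))) (snd (st (pair D (al s) v) (pair D (al s') v) ws (X,Y))))"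
    by simp
  also have "\<dots> = vv v (fst (st (pair D (al s) v) (pair D (al s') v) (t#ws) (X,Y))) (snd (st (pair D (al s) v) (pair D (al s') v) (t#ws) (X,Y)))"
    using Cons.prems by (subst R_vv) simp_all
  finally show ?case .
qed

lemma vv0: "vv v 0 0 = v" by (simp add: vv_def sc_def fun_eq_iff)
lemma vv_cal: "vv 0 1 0 = cal s" by (simp add: vv_def sc_def fun_eq_iff)

lemma braid_gen: "(\<And>p q. st p q (alt s s' m) (0,0) = st p q (alt s' s m) (0,0)) \<Longrightarrow> wm (alt s s' m) = wm (alt s' s m)"
proof
  fix v
  assume h: "\<And>p q. st p q (alt s s' m) (0,0) = st p q (alt s' s m) (0,0)"
  have "wm (alt s s' m) v = wm (alt s s' m) (vv v 0 0)" by (simp add: vv0)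
  also have "\<dots> = wm (alt s' s m) (vv v 0 0)"
    using alt_set[of s s' m] alt_set[of s' s m] by (simp add: st_wm h insert_commute)
  also have "\<dots> = wm (alt s' s m) v" by (simp add: vv0)
  finally show "wm (alt s s' m) v = wm (alt s' s m) v" .
qed

lemma step_s: "step p q s xy = (d * snd xy - fst xy - p, snd xy)" by (simp add: step_def)
lemma step_s': "step p q s' xy = (fst xy, c * fst xy - snd xy - q)" using ss' by (simp add: step_def)

abbreviation "seq k \<equiv> st 0 0 (alt s s' k) (1,0)"

lemma seq_Suc: "seq (Suc k) = (if even k then (fst (seq k), c * fst (seq k) - snd (seq k)) else (d * snd (seq k) - fst (seq k), snd (seq k)))"
proof (cases "even k")
  case True
  have "seq (Suc k) = step 0 0 s' (seq k)" using True by simp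
  also have "\<dots> = (fst (seq k), c * fst (seq k) - snd (seq k) - 0)" by (rule step_s')
  finally show ?thesis using True by simp
next
  case False
  have "seq (Suc k) = step 0 0 s (seq k)" using False by simp
  also have "\<dots> = (d * snd (seq k) - fst (seq k) - 0, snd (seq k))" by (rule step_s)
  finally show ?thesis using False by simp
qed

lemma inf_case: assumes "4 \<le> c * d"
  shows "0 \<le> fst (seq k) \<and> 0 \<le> snd (seq k) \<and> (even k \<longrightarrow> 2 * snd (seq k) \<le> c * fst (seq k)) \<and> (odd k \<longrightarrow> 2 * fst (seq k) \<le> d * snd (seq k))"
proof (induction k)
  case 0 then show ?case using c_nn by simp
next
  case (Suc k)
  define x where "x = fst (seq k)"
  define y where "y = snd (seq k)"
  have x0: "0 \<le> x" and y0: "0 \<le> y" using Suc unfolding x_def y_def by auto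
  show ?case
  proof (cases "even k")
    case True
    then have h: "2 * y \<le> c * x" using Suc unfolding x_def y_def by auto
    have s: "seq (Suc k) = (x, c * x - y)" using True using seq_Suc[of k] by (simp add: x_def y_def del: st.simps alt.simps)
    have h1: "d * (2 * y) \<le> d * (c * x)" using h d_nn by (rule mult_left_mono)
    have h2: "4 * x \<le> (c * d) * x" using assms x0 by (rule mult_right_mono)
    have "2 * x \<le> d * (c * x - y)" using h1 h2 by (simp add: algebra_simps)
    then show ?thesis using s True x0 y0 h by simp
  next
    case False
    then have h: "2 * x \<le> d * y" using Suc unfolding x_def y_def by auto
    have s: "seq (Suc k) = (d * y - x, y)" using False using seq_Suc[of k] by (simp add: x_def y_def del: st.simps alt.simps)
    have h1: "c * (2 * x) \<le> c * (d * y)" using h c_nn by (rule mult_left_mono)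
    have h2: "4 * y \<le> (c * d) * y" using assms y0 by (rule mult_right_mono)
    have "2 * y \<le> c * (d * y - x)" using h1 h2 by (simp add: algebra_simps)
    then show ?thesis using s False x0 y0 h by simp
  qed
qed

lemma cases_cd: "4 \<le> c * d \<or> (c = 0 \<and> d = 0) \<or> (c=1\<and>d=1) \<or> (c=1\<and>d=2) \<or> (c=2\<and>d=1) \<or> (c=1\<and>d=3) \<or> (c=3\<and>d=1)"
proof (rule ccontr)
  assume h: "\<not> ?thesis"
  have c0: "0 \<le> c" and d0: "0 \<le> d" using c_nn d_nn .
  have "c \<le> 3"
  proof (rule ccontr)
    assume "\<not> c \<le> 3"
    then have "c \<ge> 4" "d \<ge> 1" using cd0 d0 by auto
    then have "c * d \<ge> 4 * 1" by (intro mult_mono) auto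
    then show False using h by simp
  qed
  moreover have "d \<le> 3"
  proof (rule ccontr)
    assume "\<not> d \<le> 3"
    then have "d \<ge> 4" "c \<ge> 1" using cd0 c0 by auto
    then have "c * d \<ge> 1 * 4" by (intro mult_mono) auto
    then show False using h by simp
  qed
  ultimately have "c \<in> {0,1,2,3}" "d \<in> {0,1,2,3}" using c0 d0 by auto
  then show False using h cd0 by auto
qed

lemma fin_case:
  assumes "(c = 0 \<and> d = 0 \<and> m = 2) \<or> (c=1\<and>d=1\<and>m=3) \<or> (c=1\<and>d=2\<and>m=4) \<or> (c=2\<and>d=1\<and>m=4) \<or> (c=1\<and>d=3\<and>m=6) \<or> (c=3\<and>d=1\<and>m=6)"
  shows "wm (alt s s' m) = wm (alt s' s m)"
    and "k < m \<Longrightarrow> 0 \<le> fst (seq k) \<and> 0 \<le> snd (seq k)"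
proof -
  from assms consider (a) "c=0" "d=0" "m=2" | (b) "c=1" "d=1" "m=3" | (c) "c=1" "d=2" "m=4"
    | (d) "c=2" "d=1" "m=4" | (e) "c=1" "d=3" "m=6" | (f) "c=3" "d=1" "m=6" by blast
  note cs = this
  show "wm (alt s s' m) = wm (alt s' s m)"
  proof (rule braid_gen)
    fix p q
    show "st p q (alt s s' m) (0,0) = st p q (alt s' s m) (0,0)"
      using cs by cases (simp_all add: step_s step_s')
  qed
next
  assume k: "k < m"
  from assms consider (a) "c=0" "d=0" "m=2" | (b) "c=1" "d=1" "m=3" | (c) "c=1" "d=2" "m=4"
    | (d) "c=2" "d=1" "m=4" | (e) "c=1" "d=3" "m=6" | (f) "c=3" "d=1" "m=6" by blast
  then show "0 \<le> fst (seq k) \<and> 0 \<le> snd (seq k)"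
  proof cases
    case a then have "k = 0 \<or> k = 1" using k by auto
    then show ?thesis using a by (elim disjE) (simp_all add: step_s step_s')
  next
    case b then have "k = 0 \<or> k = 1 \<or> k = 2" using k by auto
    then show ?thesis using b by (elim disjE) (simp_all add: step_s step_s')
  next
    case c then have "k = 0 \<or> k = 1 \<or> k = 2 \<or> k = 3" using k by auto
    then show ?thesis using c by (elim disjE) (simp_all add: step_s step_s')
  next
    case d then have "k = 0 \<or> k = 1 \<or> k = 2 \<or> k = 3" using k by auto
    then show ?thesis using d by (elim disjE) (simp_all add: step_s step_s')
  next
    case e then have "k = 0 \<or> k = 1 \<or> k = 2 \<or> k = 3 \<or> k = 4 \<or> k = 5" using k by auto
    then show ?thesis using e by (elim disjE) (simp_all add: step_s step_s')
  next
    case f then have "k = 0 \<or> k = 1 \<or> k = 2 \<or> k = 3 \<or> k = 4 \<or> k = 5" using k by auto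
    then show ?thesis using f by (elim disjE) (simp_all add: step_s step_s')
  qed
qed

lemma rank2:
  assumes v: "v \<in> G {s,s'}" and le: "len {s,s'} v \<le> len {s,s'} (v \<circ> R s)"
  shows "\<exists>p q. 0 \<le> p \<and> 0 \<le> q \<and> v (cal s) = sc p (cal s) + sc q (cal s')"
proof -
  let ?J = "{s,s'}"
  have JI: "?J \<subseteq> I" using sI s'I by auto
  obtain ws where ws: "ws \<in> lists ?J" "length ws = len ?J v" "wm ws = v" using len_witness[OF v] by blast
  have ok: "altok ws"
    unfolding altok_def
  proof (intro allI impI notI)
    fix i assume i: "Suc i < length ws" and eq: "ws ! i = ws ! Suc i"
    define t where "t = ws ! i"
    have "t \<in> set ws" using i by (simp add: t_def)
    then have tI: "t \<in> I" using ws(1) JI by auto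
    have d1: "ws = take i ws @ ws ! i # drop (Suc i) ws" using i by (simp add: id_take_nth_drop)
    have d2: "drop (Suc i) ws = ws ! Suc i # drop (Suc (Suc i)) ws" using i by (simp add: Cons_nth_drop_Suc)
    have dec: "ws = take i ws @ [t,t] @ drop (Suc (Suc i)) ws" using d1 d2 eq t_def by simp
    have "wm ws = wm (take i ws @ drop (Suc (Suc i)) ws)"
      by (subst dec) (simp add: wm_append fun_eq_iff RR[OF tI])
    moreover have "take i ws @ drop (Suc (Suc i)) ws \<in> lists ?J"
      using ws(1) by (auto dest: in_set_takeD in_set_dropD)
    ultimately have "len ?J v \<le> length (take i ws @ drop (Suc (Suc i)) ws)"
      using len_le ws(3) by metis
    then show False using i ws(2) by simp
  qed
  have last: "ws \<noteq> [] \<longrightarrow> last ws = s'"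
  proof (rule impI, rule ccontr)
    assume ne: "ws \<noteq> []" and nl: "last ws \<noteq> s'"
    have "last ws \<in> set ws" using ne by simp
    then have "last ws = s" using nl ws(1) by auto
    then have dec: "ws = butlast ws @ [s]" using ne by (metis append_butlast_last_id)
    have "v \<circ> R s = wm (butlast ws)"
      using ws(3) by (subst (asm) dec) (auto simp: wm_append comp_assoc RR_comp[OF sI])
    moreover have "butlast ws \<in> lists ?J" using ws(1) by (auto dest: in_set_butlastD)
    ultimately have A: "len ?J (v \<circ> R s) \<le> length (butlast ws)" using len_le by metis
    have "length (butlast ws) < length ws" using ne by simp
    then show False using A le ws(2) by linarith
  qed
  have wsalt: "ws = alt s s' (length ws)"
    by (rule alt_char) (use ss' ws ok last in auto)
  define k where "k = length ws"
  have vcal: "v (cal s) = vv 0 (fst (seq k)) (snd (seq k))"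
  proof -
    have "v (cal s) = wm (alt s s' k) (vv 0 1 0)" using ws(3) wsalt vv_cal k_def by simp
    also have "\<dots> = vv 0 (fst (seq k)) (snd (seq k))"
      using alt_set[of s s' k] by (simp add: st_wm pair_zero)
    finally show ?thesis .
  qed
  have nn: "0 \<le> fst (seq k) \<and> 0 \<le> snd (seq k)"
  proof (cases "4 \<le> c * d")
    case True then show ?thesis using inf_case by blast
  next
    case False
    define m :: nat where "m = (if c = 0 then 2 else if c * d = 1 then 3 else if c * d = 2 then 4 else 6)"
    have mc: "(c = 0 \<and> d = 0 \<and> m = 2) \<or> (c=1\<and>d=1\<and>m=3) \<or> (c=1\<and>d=2\<and>m=4) \<or> (c=2\<and>d=1\<and>m=4) \<or> (c=1\<and>d=3\<and>m=6) \<or> (c=3\<and>d=1\<and>m=6)"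
      using cases_cd False unfolding m_def by auto
    show ?thesis
    proof (cases "k < m")
      case True then show ?thesis using fin_case(2)[OF mc] by blast
    next
      case False
      have m0: "0 < m" using mc by auto
      obtain P where P: "length P = k - m" "alt s s' (k - m + m) = P @ alt s s' m" using alt_add[of "k - m" s s' m] by blast
      obtain P' where P': "length P' = m - 1" "alt s' s m = P' @ [s]" using alt_snoc[OF m0, of s' s] by blast
      have "v = wm (P @ alt s s' m)" using ws(3) wsalt P(2) False k_def by simp
      also have "\<dots> = wm P \<circ> wm (alt s' s m)" using fin_case(1)[OF mc] by (simp add: wm_append)
      also have "\<dots> = wm (P @ P') \<circ> R s" using P'(2) by (simp add: wm_append comp_assoc)
      finally have "v \<circ> R s = wm (P @ P')" by (simp add: comp_assoc RR_comp[OF sI])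
      moreover have "P @ P' \<in> lists ?J"
      proof -
        have "set P \<subseteq> set (alt s s' (k - m + m))" using P(2) by simp
        also have "\<dots> \<subseteq> ?J" by (rule alt_set)
        finally have "set P \<subseteq> ?J" .
        moreover have "set P' \<subseteq> ?J" using alt_set[of s' s m] P'(2) by auto
        ultimately show ?thesis by auto
      qed
      ultimately have "len ?J (v \<circ> R s) \<le> length (P @ P')" using len_le by metis
      then show ?thesis using le ws(2) P P' False m0 k_def by simp
    qed
  qed
  show ?thesis using vcal nn by (intro exI[of _ "fst (seq k)"] exI[of _ "snd (seq k)"]) (simp add: vv_def)
qed

end


context KM begin

lemma rank2': "s \<in> I \<Longrightarrow> s' \<in> I \<Longrightarrow> s \<noteq> s' \<Longrightarrow> v \<in> G {s,s'} \<Longrightarrow> len {s,s'} v \<le> len {s,s'} (v \<circ> R s)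
  \<Longrightarrow> \<exists>p q. 0 \<le> p \<and> 0 \<le> q \<and> v (cal s) = sc p (cal s) + sc q (cal s')"
proof -
  assume a: "s \<in> I" "s' \<in> I" "s \<noteq> s'" "v \<in> G {s,s'}" "len {s,s'} v \<le> len {s,s'} (v \<circ> R s)"
  interpret K2: KM2 D I al cal s s' by unfold_locales (use a in auto)
  show ?thesis using K2.rank2 a by blast
qed

theorem posT: "g \<in> G I \<Longrightarrow> s \<in> I \<Longrightarrow> len I g \<le> len I (g \<circ> R s) \<Longrightarrow> pos (g (cal s))"
proof (induction "len I g" arbitrary: g s rule: less_induct)
  case less
  note g = less.prems(1) and sI = less.prems(2) and gs = less.prems(3)
  obtain ws where ws: "ws \<in> lists I" "length ws = len I g" "wm ws = g" using len_witness[OF g] by blast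
  show ?case
  proof (cases ws rule: rev_cases)
    case Nil
    then have "g = id" using ws by simp
    then show ?thesis using pos_cal[OF sI] by simp
  next
    case (snoc ws' s')
    have s'I: "s' \<in> I" using ws(1) snoc by simp
    have ws'I: "ws' \<in> lists I" using ws(1) snoc by simp
    have "g = wm ws' \<circ> R s'" using ws(3) snoc by (simp add: wm_append)
    then have gs': "g \<circ> R s' = wm ws'" by (simp add: fun_eq_iff RR[OF s'I])
    have l1: "len I (wm ws') \<le> length ws'" using len_le[OF ws'I] .
    have l2: "len I g \<le> len I (wm ws') + 1"
    proof -
      have "g = wm ws' \<circ> R s'" using ws(3) snoc by (simp add: wm_append)
      then have "len I g \<le> len I (wm ws') + len I (R s')"
        using len_comp[OF G_wm[OF ws'I] G_R[OF s'I]] by simp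
      then show ?thesis using len_R[OF s'I] by simp
    qed
    have lws': "len I (wm ws') = len I g - 1" using l1 l2 ws(2) snoc by simp
    have glen: "0 < len I g" using ws(2) snoc by simp
    have ss': "s \<noteq> s'"
    proof
      assume "s = s'"
      then have "len I (g \<circ> R s) < len I g" using gs' lws' glen by simp
      then show False using gs by simp
    qed
    define J where "J = {s, s'}"
    have JI: "J \<subseteq> I" using sI s'I J_def by auto
    define A where "A = {(u,v). u \<in> G I \<and> v \<in> G J \<and> g = u \<circ> v \<and> len I g = len I u + len J v}"
    have lenJs': "len J (R s') = 1"
    proof -
      have "len J (R s') \<le> 1" using len_R[of s' J] J_def by simp
      moreover have "len J (R s') \<noteq> 0"
        using len_0[OF G_R[of s' J]] R_ne_id[OF s'I] J_def by auto
      ultimately show ?thesis by simp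
    qed
    have A0: "(wm ws', R s') \<in> A"
      unfolding A_def using G_wm[OF ws'I] G_R[of s' J] J_def lenJs' lws' glen
      by (auto simp: gs'[symmetric] fun_eq_iff RR[OF s'I])
    obtain u v where uvA: "(u,v) \<in> A" and umin: "\<And>u' v'. (u',v') \<in> A \<Longrightarrow> len I u \<le> len I u'"
    proof -
      have "\<exists>n. \<exists>uv\<in>A. len I (fst uv) = n" using A0 by force
      from ex_has_least_nat[of "\<lambda>uv. uv \<in> A" "(wm ws', R s')" "\<lambda>uv. len I (fst uv)"] A0
      obtain uv where "uv \<in> A" "\<forall>uv'. uv' \<in> A \<longrightarrow> len I (fst uv) \<le> len I (fst uv')" by blast
      then show ?thesis using that[of "fst uv" "snd uv"] by force
    qed
    have u: "u \<in> G I" and v: "v \<in> G J" and guv: "g = u \<circ> v" and luv: "len I g = len I u + len J v"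
      using uvA unfolding A_def by auto
    have ulen: "len I u < len I g" using umin[OF A0] lws' glen by simp
    have vI: "v \<in> G I" using G_mono[OF JI v] .
    have comp_le: "len I (x \<circ> y) \<le> len I x + len J y" if "x \<in> G I" "y \<in> G J" for x y
      using len_comp[OF that(1) G_mono[OF JI that(2)]] len_mono[OF JI that(2)] by simp
    have ut: "len I u \<le> len I (u \<circ> R t)" if tJ: "t \<in> J" for t
    proof (rule ccontr)
      assume h: "\<not> len I u \<le> len I (u \<circ> R t)"
      have tI: "t \<in> I" using tJ JI by auto
      have u': "u \<circ> R t \<in> G I" using G_comp[OF u G_R[OF tI]] .
      have v': "R t \<circ> v \<in> G J" using G_comp[OF G_R[OF tJ] v] .
      have g': "g = (u \<circ> R t) \<circ> (R t \<circ> v)" using guv by (simp add: fun_eq_iff RR[OF tI])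
      have "len J (R t \<circ> v) \<le> len J (R t) + len J v" using len_comp[OF G_R[OF tJ] v] .
      then have "len J (R t \<circ> v) \<le> 1 + len J v" using len_R[OF tJ] by simp
      moreover have "len I g \<le> len I (u \<circ> R t) + len J (R t \<circ> v)"
        using comp_le[OF u' v'] g' by simp
      ultimately have "len I g = len I (u \<circ> R t) + len J (R t \<circ> v)" using h luv by simp
      then have "(u \<circ> R t, R t \<circ> v) \<in> A" unfolding A_def using u' v' g' by simp
      from umin[OF this] h show False by simp
    qed
    have pu: "pos (u (cal t))" if tJ: "t \<in> J" for t
      using less.hyps[OF ulen u _ ut[OF tJ]] tJ JI by auto
    have vlen: "len J v \<le> len J (v \<circ> R s)"
    proof (rule ccontr)
      assume h: "\<not> len J v \<le> len J (v \<circ> R s)"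
      have sJ: "s \<in> J" using J_def by simp
      have "g \<circ> R s = u \<circ> (v \<circ> R s)" using guv by auto
      then have "len I (g \<circ> R s) \<le> len I u + len J (v \<circ> R s)"
        using comp_le[OF u G_comp[OF v G_R[OF sJ]]] by simp
      then show False using h luv gs by simp
    qed
    obtain p q where pq: "0 \<le> p" "0 \<le> q" "v (cal s) = sc p (cal s) + sc q (cal s')"
      using rank2'[OF sI s'I ss' v[unfolded J_def] vlen[unfolded J_def]] by blast
    have "g (cal s) = sc p (u (cal s)) + sc q (u (cal s'))"
      using guv pq(3) G_lin[OF u] by simp
    then show ?thesis using pu[of s] pu[of s'] J_def pq pos_add pos_sc by simp
  qed
qed

end


context KM begin

lemma reduced_prefix: "ws @ [t] \<in> lists I \<Longrightarrow> length (ws@[t]) = len I (wm (ws@[t])) \<Longrightarrow> length ws = len I (wm ws)"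
proof -
  assume a: "ws @ [t] \<in> lists I" "length (ws@[t]) = len I (wm (ws@[t]))"
  have wsI: "ws \<in> lists I" and tI: "t \<in> I" using a(1) by auto
  have "len I (wm (ws@[t])) \<le> len I (wm ws) + len I (R t)"
    using len_comp[OF G_wm[OF wsI] G_R[OF tI]] by (simp add: wm_append)
  then have "length ws \<le> len I (wm ws)" using a(2) len_R[OF tI] by simp
  then show ?thesis using len_le[OF wsI] by simp
qed

lemma pos_nz: "pos x \<Longrightarrow> pos y \<Longrightarrow> x + y = 0 \<Longrightarrow> y = 0"
proof -
  assume "pos x" "pos y" and s: "x + y = 0"
  then obtain n m where n: "\<forall>i\<in>I. 0 \<le> n i" "x = lc n" and m: "\<forall>i\<in>I. 0 \<le> m i" "y = lc m"
    unfolding pos_def by blast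
  have "lc (\<lambda>i. n i + m i) = lc (\<lambda>i. 0)" using s n m by (simp add: lc_add lc_zero)
  then have "\<forall>i\<in>I. n i + m i = 0" using lc_free by blast
  then have "\<forall>i\<in>I. m i = 0" using n m by force
  then have "lc m = lc (\<lambda>i. 0)" unfolding lc_def by (intro ext sum.cong) auto
  then show ?thesis using m lc_zero by simp
qed

lemma wm_inj: "ws \<in> lists I \<Longrightarrow> wm ws x = 0 \<Longrightarrow> x = 0"
  using wm_rev1[of ws x] wm_zero[of "rev ws"] by auto

lemma tele: "wm (ws @ [t]) l = wm ws l - sc (pair D (al t) l) (wm ws (cal t))"
  by (simp add: wm_snoc R_eq wm_diff wm_sc)


lemma dom_red: assumes dom: "\<forall>i\<in>I. 0 \<le> pair D (al i) l"
  shows "ws \<in> lists I \<Longrightarrow> length ws = len I (wm ws) \<Longrightarrow>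
     pos (l - wm ws l) \<and> ((\<forall>i\<in>I. 1 \<le> pair D (al i) l) \<longrightarrow> ws \<noteq> [] \<longrightarrow> l - wm ws l \<noteq> 0)"
proof (induction ws rule: rev_induct)
  case Nil then show ?case using pos_zero[unfolded zero_fun_def] by simp
next
  case (snoc t ws)
  have wsI: "ws \<in> lists I" and tI: "t \<in> I" using snoc.prems(1) by auto
  have red: "length ws = len I (wm ws)" using reduced_prefix snoc.prems by blast
  have IH: "pos (l - wm ws l)" using snoc.IH[OF wsI red] by blast
  define p where "p = pair D (al t) l"
  have p0: "0 \<le> p" using dom tI p_def by auto
  have e: "wm (ws@[t]) = wm ws \<circ> R t" by (simp add: wm_append)
  have L: "Suc (length ws) = len I (wm ws \<circ> R t)"
    using snoc.prems(2) unfolding e length_append_singleton .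
  have "len I (wm ws) \<le> len I (wm ws \<circ> R t)"
    using L red by linarith
  then have pb: "pos (wm ws (cal t))" using posT[OF G_wm[OF wsI] tI] by simp
  have eq: "l - wm (ws @ [t]) l = (l - wm ws l) + sc p (wm ws (cal t))"
    by (simp add: tele p_def)
  have P: "pos (l - wm (ws @ [t]) l)" unfolding eq using IH pos_sc[OF p0 pb] by (rule pos_add)
  moreover have "(\<forall>i\<in>I. 1 \<le> pair D (al i) l) \<longrightarrow> l - wm (ws @ [t]) l \<noteq> 0"
  proof (intro impI notI)
    assume r: "\<forall>i\<in>I. 1 \<le> pair D (al i) l" and z: "l - wm (ws @ [t]) l = 0"
    have "sc p (wm ws (cal t)) = 0" using pos_nz[OF IH pos_sc[OF p0 pb]] z eq by simp
    moreover have "p \<noteq> 0" using r tI p_def by force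
    ultimately have "wm ws (cal t) = 0" by (simp add: sc_def fun_eq_iff)
    then have "cal t = 0" using wm_inj[OF wsI] by blast
    then show False using cal_nz[OF tI] by simp
  qed
  ultimately show ?case by blast
qed

lemma dom_le: "\<forall>i\<in>I. 0 \<le> pair D (al i) l \<Longrightarrow> g \<in> G I \<Longrightarrow> pos (l - g l)"
  using len_witness[of g I] dom_red by metis

lemma stab: "\<forall>i\<in>I. 1 \<le> pair D (al i) l \<Longrightarrow> g \<in> G I \<Longrightarrow> g l = l \<Longrightarrow> g = id"
proof -
  assume r: "\<forall>i\<in>I. 1 \<le> pair D (al i) l" and g: "g \<in> G I" and f: "g l = l"
  obtain ws where ws: "ws \<in> lists I" "length ws = len I g" "wm ws = g" using len_witness[OF g] by blast
  have "\<forall>i\<in>I. 0 \<le> pair D (al i) l" using r by force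
  from dom_red[OF this ws(1)] ws r f have "ws = []" by auto
  then show ?thesis using ws by simp
qed

lemma G_inv: "g \<in> G I \<Longrightarrow> \<exists>h\<in>G I. (\<forall>x. h (g x) = x) \<and> (\<forall>x. g (h x) = x)"
proof -
  assume "g \<in> G I"
  then obtain ws where "ws \<in> lists I" "g = wm ws" unfolding G_def by blast
  moreover have "rev ws \<in> lists I" using \<open>ws \<in> lists I\<close> by auto
  ultimately show ?thesis using wm_rev1[of ws] wm_rev2[of ws] G_wm[of "rev ws" I]
    by (intro bexI[of _ "wm (rev ws)"]) auto
qed

lemma orbit_inj: "\<forall>i\<in>I. 1 \<le> pair D (al i) l \<Longrightarrow> inj_on (\<lambda>g. g l) (G I)"
proof (rule inj_onI)
  fix g h assume r: "\<forall>i\<in>I. 1 \<le> pair D (al i) l" and g: "g \<in> G I" and h: "h \<in> G I" and e: "g l = h l"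
  obtain h' where h': "h' \<in> G I" "\<forall>x. h' (h x) = x" "\<forall>x. h (h' x) = x" using G_inv[OF h] by blast
  have "(h' \<circ> g) l = l" using e h' by simp
  then have "h' \<circ> g = id" using stab[OF r G_comp[OF h'(1) g]] by simp
  then have "\<forall>x. h' (g x) = x" by (simp add: fun_eq_iff)
  then have "\<forall>x. g x = h x" using h' by metis
  then show "g = h" by auto
qed

lemma R_lat: "i \<in> I \<Longrightarrow> v \<in> lat D \<Longrightarrow> R i v \<in> lat D"
  using cal_lat by (auto simp: lat_def refl_def)
lemma wm_lat: "ws \<in> lists I \<Longrightarrow> v \<in> lat D \<Longrightarrow> wm ws v \<in> lat D"
  by (induction ws) (auto simp: R_lat)
lemma G_lat: "g \<in> G I \<Longrightarrow> v \<in> lat D \<Longrightarrow> g v \<in> lat D"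
  unfolding G_def using wm_lat by auto

definition restr :: "(('d\<Rightarrow>int)\<Rightarrow>('d\<Rightarrow>int)) \<Rightarrow> (('d\<Rightarrow>int)\<Rightarrow>('d\<Rightarrow>int))" where
  "restr g = (\<lambda>v. if v \<in> lat D then g v else undefined)"

lemma weyl_G: "w \<in> weyl D I al cal \<Longrightarrow> \<exists>g\<in>G I. w = restr g"
proof (induction rule: weyl.induct)
  case weyl_id
  have "(\<lambda>v. v) \<in> G I" using G_id[of I] by (simp add: id_def)
  moreover have "(\<lambda>a. if a \<in> lat D then a else undefined) = restr (\<lambda>v. v)" by (simp add: restr_def)
  ultimately show ?case by blast
next
  case (weyl_step w i)
  then obtain g where g: "g \<in> G I" "w = restr g" by blast
  have "(\<lambda>v. if v \<in> lat D then R i (w v) else undefined) = restr (R i \<circ> g)"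
    unfolding g(2) by (simp add: restr_def fun_eq_iff)
  then show ?case using G_comp[OF G_R[OF weyl_step.hyps(2)] g(1)] by blast
qed

lemma G_weyl: "ws \<in> lists I \<Longrightarrow> restr (wm ws) \<in> weyl D I al cal"
proof (induction ws)
  case Nil
  have eq: "restr (wm []) = (\<lambda>v. if v \<in> lat D then v else undefined)" by (simp add: restr_def fun_eq_iff)
  show ?case unfolding eq by (rule weyl.weyl_id)
next
  case (Cons i ws)
  then have A: "(\<lambda>v. if v \<in> lat D then R i (restr (wm ws) v) else undefined) \<in> weyl D I al cal"
    by (intro weyl.weyl_step) auto
  have B: "(\<lambda>v. if v \<in> lat D then R i (restr (wm ws) v) else undefined) = restr (wm (i#ws))"
    by (auto simp: restr_def fun_eq_iff)
  show ?case using A unfolding B .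
qed

lemma weyl_eq: "weyl D I al cal = restr ` G I"
  using weyl_G G_weyl unfolding G_def by blast

lemma R_out: "i \<in> I \<Longrightarrow> (\<forall>k\<in>D. v k = 0) \<Longrightarrow> R i v = v"
  by (auto simp: refl_def pair_def fun_eq_iff)

lemma wm_split: "ws \<in> lists I \<Longrightarrow> wm ws v = wm ws (\<lambda>k. if k \<in> D then v k else 0) + (\<lambda>k. if k \<in> D then 0 else v k)"
proof -
  assume ws: "ws \<in> lists I"
  have out: "wm ws (\<lambda>k. if k \<in> D then 0 else v k) = (\<lambda>k. if k \<in> D then 0 else v k)"
    using ws by (induction ws) (auto simp: R_out)
  have "v = (\<lambda>k. if k \<in> D then v k else 0) + (\<lambda>k. if k \<in> D then 0 else v k)" by (auto simp: fun_eq_iff)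
  then have "wm ws v = wm ws ((\<lambda>k. if k \<in> D then v k else 0) + (\<lambda>k. if k \<in> D then 0 else v k))" by simp
  also have "\<dots> = wm ws (\<lambda>k. if k \<in> D then v k else 0) + (\<lambda>k. if k \<in> D then 0 else v k)"
    by (simp add: wm_add out)
  finally show ?thesis .
qed

lemma restr_inj: "inj_on restr (G I)"
proof (rule inj_onI)
  fix g h assume g: "g \<in> G I" and h: "h \<in> G I" and e: "restr g = restr h"
  obtain ws where ws: "ws \<in> lists I" "g = wm ws" using g unfolding G_def by blast
  obtain vs where vs: "vs \<in> lists I" "h = wm vs" using h unfolding G_def by blast
  show "g = h"
  proof
    fix v
    have L: "(\<lambda>k. if k \<in> D then v k else 0) \<in> lat D" by (simp add: lat_def)
    have "g (\<lambda>k. if k \<in> D then v k else 0) = h (\<lambda>k. if k \<in> D then v k else 0)"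
      using fun_cong[OF e, of "\<lambda>k. if k \<in> D then v k else 0"] L by (simp add: restr_def)
    then show "g v = h v" using wm_split[OF ws(1), of v] wm_split[OF vs(1), of v] ws vs by simp
  qed
qed

lemma finite_weyl_G: "finite (weyl D I al cal) \<longleftrightarrow> finite (G I)"
  using weyl_eq restr_inj finite_image_iff by metis

end


lemma regular_exists:
  fixes al :: "'i \<Rightarrow> 'd \<Rightarrow> int"
  assumes finI: "finite I" and finD: "finite D" and lat: "\<forall>i\<in>I. al i \<in> lat D" and free: "free_family I al"
  shows "\<exists>l\<in>lat D. \<forall>i\<in>I. 1 \<le> pair D (al i) l"
proof -
  define n where "n = card I"
  obtain e where e: "bij_betw e {..<n} I" using ex_bij_betw_nat_finite[OF finI] n_def
    by (metis atLeast0LessThan)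
  have eI: "j < n \<Longrightarrow> e j \<in> I" for j using e by (auto simp: bij_betw_def)
  have out: "k \<notin> D \<Longrightarrow> j < n \<Longrightarrow> al (e j) k = 0" for k j using lat eI by (auto simp: lat_def)
  define M :: "int mat" where "M = mat n n (\<lambda>(i,j). pair D (al (e i)) (al (e j)))"
  have Mc: "M \<in> carrier_mat n n" by (simp add: M_def)
  have Mij: "i < n \<Longrightarrow> j < n \<Longrightarrow> M $$ (i,j) = pair D (al (e i)) (al (e j))" for i j by (simp add: M_def)
  have det: "det M \<noteq> 0"
  proof
    assume "det M = 0"
    then obtain y where y: "y \<in> carrier_vec n" "y \<noteq> 0\<^sub>v n" "M *\<^sub>v y = 0\<^sub>v n"
      using det_0_iff_vec_prod_zero[OF Mc] by blast
    define w where "w = (\<lambda>k. \<Sum>j<n. y$j * al (e j) k)"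
    have My: "(\<Sum>j<n. M$$(i,j) * y$j) = 0" if i: "i<n" for i
    proof -
      have "(M *\<^sub>v y) $ i = 0" using y(3) i by simp
      moreover have "(M *\<^sub>v y) $ i = (\<Sum>j<n. M$$(i,j) * y$j)"
        using i Mc y(1) by (auto simp: scalar_prod_def atLeast0LessThan intro!: sum.cong)
      ultimately show ?thesis by simp
    qed
    have inner: "(\<Sum>k\<in>D. al (e i) k * w k) = (\<Sum>j<n. M$$(i,j) * y$j)" if i: "i<n" for i
    proof -
      have "(\<Sum>k\<in>D. al (e i) k * w k) = (\<Sum>k\<in>D. \<Sum>j<n. y$j * (al (e i) k * al (e j) k))"
        unfolding w_def by (simp add: sum_distrib_left algebra_simps)
      also have "\<dots> = (\<Sum>j<n. \<Sum>k\<in>D. y$j * (al (e i) k * al (e j) k))" by (rule sum.swap)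
      also have "\<dots> = (\<Sum>j<n. M$$(i,j) * y$j)"
        using i by (intro sum.cong) (auto simp: Mij pair_def sum_distrib_left mult.commute)
      finally show ?thesis .
    qed
    have "(\<Sum>k\<in>D. w k * w k) = 0"
    proof -
      have "(\<Sum>k\<in>D. w k * w k) = (\<Sum>k\<in>D. \<Sum>i<n. y$i * (al (e i) k * w k))"
        by (simp add: w_def sum_distrib_right algebra_simps)
      also have "\<dots> = (\<Sum>i<n. \<Sum>k\<in>D. y$i * (al (e i) k * w k))" by (rule sum.swap)
      also have "\<dots> = (\<Sum>i<n. y$i * (\<Sum>k\<in>D. al (e i) k * w k))" by (simp add: sum_distrib_left)
      also have "\<dots> = 0" using inner My by simp
      finally show ?thesis .
    qed
    then have wD: "\<forall>k\<in>D. w k * w k = 0" using finD by (subst (asm) sum_nonneg_eq_0_iff) auto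
    have w0: "w k = 0" for k
    proof (cases "k \<in> D")
      case True then show ?thesis using wD by simp
    next
      case False then show ?thesis unfolding w_def using out by simp
    qed
    define cc where "cc i = y $ (inv_into {..<n} e i)" for i
    have "(\<lambda>k. \<Sum>i\<in>I. cc i * al i k) = (\<lambda>k. 0)"
    proof
      fix k
      have "(\<Sum>i\<in>I. cc i * al i k) = (\<Sum>j<n. cc (e j) * al (e j) k)"
        using sum.reindex_bij_betw[OF e, of "\<lambda>i. cc i * al i k"] by simp
      also have "\<dots> = w k" unfolding w_def cc_def
        using e by (intro sum.cong) (auto simp: bij_betw_def inv_into_f_f)
      finally show "(\<Sum>i\<in>I. cc i * al i k) = 0" using w0 by simp
    qed
    then have "\<forall>i\<in>I. cc i = 0" using free unfolding free_family_def by blast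
    then have "\<forall>j<n. y $ j = 0" using eI e unfolding cc_def by (metis bij_betw_def inv_into_f_f lessThan_iff)
    then have "y = 0\<^sub>v n" using y(1) by (intro eq_vecI) auto
    then show False using y(2) by simp
  qed
  define A where "A = adj_mat M"
  have MA: "M * A = det M \<cdot>\<^sub>m 1\<^sub>m n" using adj_mat(2)[OF Mc] A_def by simp
  have Ac: "A \<in> carrier_mat n n" using adj_mat(1)[OF Mc] A_def by simp
  define z where "z j = det M * (\<Sum>l<n. A$$(j,l))" for j
  define lam where "lam = (\<lambda>k. \<Sum>j<n. z j * al (e j) k)"
  show ?thesis
  proof (intro bexI ballI)
    show "lam \<in> lat D" unfolding lat_def lam_def using out by simp
  next
    fix i assume iI: "i \<in> I"
    then obtain i' where i': "i' < n" "e i' = i" using e by (auto simp: bij_betw_def)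
    have MAe: "(\<Sum>j<n. M$$(i',j) * A$$(j,l)) = det M * (if i' = l then 1 else 0)" if l: "l < n" for l
    proof -
      have "(M * A) $$ (i',l) = (\<Sum>j<n. M$$(i',j) * A$$(j,l))"
        using i' l Mc Ac by (auto simp: scalar_prod_def atLeast0LessThan intro!: sum.cong)
      moreover have "(M * A) $$ (i',l) = det M * (if i' = l then 1 else 0)" using MA i' l by simp
      ultimately show ?thesis by simp
    qed
    have "pair D (al i) lam = (\<Sum>j<n. z j * pair D (al i) (al (e j)))"
      unfolding lam_def pair_def by (simp add: sum_distrib_left sum.swap[of _ D] algebra_simps)
    also have "\<dots> = (\<Sum>j<n. z j * M$$(i',j))" using i' by (intro sum.cong) (auto simp: Mij)
    also have "\<dots> = (\<Sum>j<n. det M * (\<Sum>l<n. M$$(i',j) * A$$(j,l)))"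
    proof (rule sum.cong[OF refl])
      fix j
      show "z j * M$$(i',j) = det M * (\<Sum>l<n. M$$(i',j) * A$$(j,l))"
        unfolding z_def sum_distrib_left sum_distrib_right by (simp add: mult_ac)
    qed
    also have "\<dots> = det M * (\<Sum>j<n. \<Sum>l<n. M$$(i',j) * A$$(j,l))" by (simp add: sum_distrib_left)
    also have "\<dots> = det M * (\<Sum>l<n. \<Sum>j<n. M$$(i',j) * A$$(j,l))" using sum.swap[of "\<lambda>j l. M$$(i',j) * A$$(j,l)" "{..<n}" "{..<n}"] by simp
    also have "\<dots> = det M * (\<Sum>l<n. det M * (if i' = l then 1 else 0))" using MAe by simp
    also have "\<dots> = det M * (\<Sum>l<n. if i' = l then det M else 0)" by (intro arg_cong[where f="\<lambda>x. det M * x"] sum.cong) auto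
    also have "\<dots> = det M * det M" using i' by (simp add: sum.delta)
    finally have "pair D (al i) lam = det M * det M" .
    moreover have "0 < det M * det M" using det by (auto simp: zero_less_mult_iff linorder_neq_iff)
    ultimately show "1 \<le> pair D (al i) lam" by simp
  qed
qed


context KM begin

lemma wm_lcomb: "finite A \<Longrightarrow> wm ws (\<lambda>k. \<Sum>j\<in>A. m j * x j k) = (\<lambda>k. \<Sum>j\<in>A. m j * wm ws (x j) k)"
proof (induction A rule: finite_induct)
  case empty
  then show ?case using wm_zero[of ws] by (simp add: zero_fun_def)
next
  case (insert a A)
  have "(\<lambda>k. \<Sum>j\<in>insert a A. m j * x j k) = sc (m a) (x a) + (\<lambda>k. \<Sum>j\<in>A. m j * x j k)"
    using insert by (simp add: sc_def fun_eq_iff)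
  then have "wm ws (\<lambda>k. \<Sum>j\<in>insert a A. m j * x j k) = sc (m a) (wm ws (x a)) + (\<lambda>k. \<Sum>j\<in>A. m j * wm ws (x j) k)"
    using insert by (simp add: wm_add wm_sc)
  then show ?case using insert by (simp add: sc_def fun_eq_iff)
qed

lemma G_lcomb: "g \<in> G I \<Longrightarrow> g (lc m) k = (\<Sum>i\<in>I. m i * g (cal i) k)"
  unfolding G_def lc_def using wm_lcomb[OF finI] by auto

lemma G_uminus: "g \<in> G I \<Longrightarrow> g (- x) = - g x"
  unfolding G_def using wm_uminus by auto

lemma sumG_cal: assumes finG: "finite (G I)" and i: "i \<in> I"
  shows "(\<Sum>g\<in>G I. g (cal i) k) = 0"
proof -
  define phi where "phi g = g \<circ> R i" for g :: "('d\<Rightarrow>int)\<Rightarrow>('d\<Rightarrow>int)"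
  have inj: "inj_on phi (G I)"
  proof (rule inj_onI)
    fix g h assume "phi g = phi h"
    then have "\<forall>x. g (R i x) = h (R i x)" by (simp add: phi_def fun_eq_iff)
    then have "\<forall>x. g (R i (R i x)) = h (R i (R i x))" by blast
    then show "g = h" by (simp add: RR[OF i] fun_eq_iff)
  qed
  have sub: "phi ` G I \<subseteq> G I" using G_comp G_R[OF i] by (auto simp: phi_def)
  have eq: "phi ` G I = G I" using endo_inj_surj[OF finG sub inj] .
  have "(\<Sum>g\<in>G I. g (cal i) k) = (\<Sum>g\<in>phi ` G I. g (cal i) k)" using eq by simp
  also have "\<dots> = (\<Sum>g\<in>G I. phi g (cal i) k)" using sum.reindex[OF inj] by simp
  also have "\<dots> = (\<Sum>g\<in>G I. - g (cal i) k)"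
    by (intro sum.cong) (auto simp: phi_def R_cal_self[OF i] G_uminus)
  also have "\<dots> = - (\<Sum>g\<in>G I. g (cal i) k)" by (simp add: sum_negf)
  finally show ?thesis by simp
qed

lemma sumG_lc: "finite (G I) \<Longrightarrow> (\<Sum>g\<in>G I. g (lc m) k) = 0"
proof -
  assume finG: "finite (G I)"
  have "(\<Sum>g\<in>G I. g (lc m) k) = (\<Sum>g\<in>G I. \<Sum>i\<in>I. m i * g (cal i) k)"
    by (intro sum.cong) (auto simp: G_lcomb)
  also have "\<dots> = (\<Sum>i\<in>I. m i * (\<Sum>g\<in>G I. g (cal i) k))"
    by (subst sum.swap) (simp add: sum_distrib_left)
  also have "\<dots> = 0" using sumG_cal[OF finG] by simp
  finally show ?thesis .
qed

lemma lc_restrict: "lc m = lc (restrict m I)"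
  unfolding lc_def by (intro ext sum.cong) auto

lemma finQs: "finite {lc m | m. \<exists>N. lc N = t \<and> (\<forall>i\<in>I. 0 \<le> m i \<and> m i \<le> N i)}"
proof (cases "\<exists>N. lc N = t")
  case False then show ?thesis by simp
next
  case True
  then obtain N0 where N0: "lc N0 = t" by blast
  have "{lc m | m. \<exists>N. lc N = t \<and> (\<forall>i\<in>I. 0 \<le> m i \<and> m i \<le> N i)} \<subseteq> lc ` (PiE I (\<lambda>i. {0..N0 i}))"
  proof
    fix x assume "x \<in> {lc m | m. \<exists>N. lc N = t \<and> (\<forall>i\<in>I. 0 \<le> m i \<and> m i \<le> N i)}"
    then obtain m N where x: "x = lc m" and N: "lc N = t" and mN: "\<forall>i\<in>I. 0 \<le> m i \<and> m i \<le> N i" by blast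
    have "\<forall>i\<in>I. N i = N0 i" using lc_free N N0 by metis
    then have mem: "restrict m I \<in> PiE I (\<lambda>i. {0..N0 i})" using mN by auto
    show "x \<in> lc ` (PiE I (\<lambda>i. {0..N0 i}))" using image_eqI[OF _ mem, of x lc] x lc_restrict[of m] by simp
  qed
  moreover have "finite (lc ` (PiE I (\<lambda>i. {0..N0 i})))" using finI by (intro finite_imageI finite_PiE) auto
  ultimately show ?thesis by (rule finite_subset)
qed

lemma inv_G: "f \<in> w_inv D I al cal S \<Longrightarrow> g \<in> G I \<Longrightarrow> l \<in> lat D \<Longrightarrow> f (g l) = f l"
proof -
  assume f: "f \<in> w_inv D I al cal S" and g: "g \<in> G I" and l: "l \<in> lat D"
  have "restr g \<in> weyl D I al cal" using weyl_eq g by blast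
  then have "f (restr g l) = f l" using f l unfolding w_inv_def by blast
  then show ?thesis using l by (simp add: restr_def)
qed

lemma leQ_lc: "leQ I cal e j \<longleftrightarrow> (\<exists>n. (\<forall>i\<in>I. 0 \<le> n i) \<and> j - e = lc n)"
proof
  assume "leQ I cal e j"
  then obtain n :: "'i \<Rightarrow> nat" where "j - e = (\<lambda>k. \<Sum>i\<in>I. int (n i) * cal i k)"
    unfolding leQ_def Qplus_def by blast
  then show "\<exists>n. (\<forall>i\<in>I. 0 \<le> n i) \<and> j - e = lc n"
    by (intro exI[of _ "\<lambda>i. int (n i)"]) (simp add: lc_def)
next
  assume "\<exists>n. (\<forall>i\<in>I. 0 \<le> n i) \<and> j - e = lc n"
  then obtain n where n: "\<forall>i\<in>I. 0 \<le> n i" "j - e = lc n" by blast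
  have "lc n = (\<lambda>k. \<Sum>i\<in>I. int (nat (n i)) * cal i k)"
    unfolding lc_def using n(1) by (intro ext sum.cong) auto
  then show "leQ I cal e j" unfolding leQ_def Qplus_def using n(2)
    by (intro CollectI exI[of _ "\<lambda>i. nat (n i)"]) simp
qed

lemma dir1: assumes finG: "finite (G I)" and f: "f \<in> w_inv D I al cal (looijenga D I cal)"
  shows "finite (supp f)"
proof -
  have flat: "supp f \<subseteq> lat D" and af: "almost_finite D I cal (supp f)"
    using f unfolding w_inv_def looijenga_def by auto
  obtain J where J: "finite J" "J \<subseteq> lat D" "\<forall>e\<in>supp f. \<exists>j\<in>J. leQ I cal e j"
    using af unfolding almost_finite_def by blast
  define T where "T phi = (\<lambda>k. (\<Sum>g\<in>G I. phi g k) - (\<Sum>g\<in>G I. g (phi id) k))" for phi :: "(('d\<Rightarrow>int)\<Rightarrow>('d\<Rightarrow>int)) \<Rightarrow> ('d\<Rightarrow>int)"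
  define Qs where "Qs t = {lc m | m. \<exists>N. lc N = t \<and> (\<forall>i\<in>I. 0 \<le> m i \<and> m i \<le> N i)}" for t
  define F where "F = (\<Union>phi\<in>PiE (G I) (\<lambda>_. J). (\<lambda>x. phi id - x) ` Qs (T phi))"
  have "finite F" unfolding F_def using finG J(1) finQs[unfolded Qs_def[symmetric]]
    by (intro finite_UN_I finite_PiE finite_imageI) auto
  moreover have "supp f \<subseteq> F"
  proof
    fix \<nu> assume nu: "\<nu> \<in> supp f"
    have nul: "\<nu> \<in> lat D" using nu flat by auto
    have "\<forall>g\<in>G I. \<exists>p. fst p \<in> J \<and> (\<forall>i\<in>I. 0 \<le> snd p i) \<and> fst p - g \<nu> = lc (snd p)"
    proof
      fix g assume g: "g \<in> G I"
      have "g \<nu> \<in> supp f" using nu inv_G[OF f g nul] by (simp add: supp_def)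
      then obtain j where j: "j \<in> J" "leQ I cal (g \<nu>) j" using J(3) by blast
      then obtain n where "\<forall>i\<in>I. 0 \<le> n i" "j - g \<nu> = lc n" using leQ_lc by blast
      then show "\<exists>p. fst p \<in> J \<and> (\<forall>i\<in>I. 0 \<le> snd p i) \<and> fst p - g \<nu> = lc (snd p)"
        using j by (intro exI[of _ "(j,n)"]) auto
    qed
    then obtain P where P: "\<forall>g\<in>G I. fst (P g) \<in> J \<and> (\<forall>i\<in>I. 0 \<le> snd (P g) i) \<and> fst (P g) - g \<nu> = lc (snd (P g))"
      by (metis bchoice)
    define phi where "phi g = (if g \<in> G I then fst (P g) else undefined)" for g
    define N where "N i = (\<Sum>g\<in>G I. snd (P g) i)" for i
    have phiP: "phi \<in> PiE (G I) (\<lambda>_. J)" using P by (auto simp: phi_def PiE_def extensional_def)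
    have idG: "id \<in> G I" by (rule G_id)
    have "fst (P id) - id \<nu> = lc (snd (P id))" using P idG by blast
    then have h: "fst (P id) - \<nu> = lc (snd (P id))" by simp
    have nu_eq: "\<nu> = phi id - lc (snd (P id))"
      using idG unfolding phi_def h[symmetric] by simp
    have key: "lc N = T phi"
    proof
      fix k
      have "lc N k = (\<Sum>g\<in>G I. lc (snd (P g)) k)"
        unfolding lc_def N_def sum_distrib_right by (rule sum.swap)
      also have "\<dots> = (\<Sum>g\<in>G I. phi g k - g \<nu> k)"
        using P by (intro sum.cong) (auto simp: phi_def simp flip: minus_apply)
      also have "\<dots> = (\<Sum>g\<in>G I. phi g k) - (\<Sum>g\<in>G I. g \<nu> k)" by (simp add: sum_subtractf)
      also have "(\<Sum>g\<in>G I. g \<nu> k) = (\<Sum>g\<in>G I. g (phi id) k - g (lc (snd (P id))) k)"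
        using nu_eq by (intro sum.cong) (auto simp: G_lin)
      also have "\<dots> = (\<Sum>g\<in>G I. g (phi id) k)"
        using sumG_lc[OF finG] by (simp add: sum_subtractf)
      finally show "lc N k = T phi k" by (simp add: T_def)
    qed
    have bnd: "\<forall>i\<in>I. 0 \<le> snd (P id) i \<and> snd (P id) i \<le> N i"
    proof
      fix i assume i: "i \<in> I"
      have "snd (P id) i \<le> N i" unfolding N_def
        by (rule member_le_sum[OF idG]) (use P i finG in auto)
      then show "0 \<le> snd (P id) i \<and> snd (P id) i \<le> N i" using P i idG by auto
    qed
    have "lc (snd (P id)) \<in> Qs (T phi)" unfolding Qs_def using key bnd by blast
    then show "\<nu> \<in> F" unfolding F_def using phiP nu_eq by blast
  qed
  ultimately show ?thesis by (rule finite_subset[rotated])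
qed

lemma dir1': "finite (G I) \<Longrightarrow> w_inv D I al cal (looijenga D I cal :: (('d\<Rightarrow>int)\<Rightarrow>'r::zero) set) = w_inv D I al cal (group_alg D)"
proof -
  assume finG: "finite (G I)"
  have "group_alg D \<subseteq> (looijenga D I cal :: (('d\<Rightarrow>int)\<Rightarrow>'r) set)"
  proof
    fix f :: "('d\<Rightarrow>int) \<Rightarrow> 'r" assume f: "f \<in> group_alg D"
    have "\<forall>e\<in>supp f. leQ I cal e e" unfolding leQ_def Qplus_def
      by (auto intro!: exI[of _ "\<lambda>i. 0"] simp: fun_eq_iff)
    then have "almost_finite D I cal (supp f)" using f unfolding almost_finite_def group_alg_def by blast
    then show "f \<in> looijenga D I cal" using f unfolding looijenga_def group_alg_def by blast
  qed
  then have "w_inv D I al cal (group_alg D) \<subseteq> w_inv D I al cal (looijenga D I cal :: (('d\<Rightarrow>int)\<Rightarrow>'r) set)"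
    unfolding w_inv_def by blast
  moreover have "w_inv D I al cal (looijenga D I cal :: (('d\<Rightarrow>int)\<Rightarrow>'r) set) \<subseteq> w_inv D I al cal (group_alg D)"
  proof
    fix f :: "('d\<Rightarrow>int) \<Rightarrow> 'r" assume f: "f \<in> w_inv D I al cal (looijenga D I cal :: (('d\<Rightarrow>int)\<Rightarrow>'r) set)"
    then have "finite (supp f)" using dir1[OF finG] by blast
    then show "f \<in> w_inv D I al cal (group_alg D)"
      using f unfolding w_inv_def looijenga_def group_alg_def by blast
  qed
  ultimately show ?thesis by blast
qed

lemma dir2: assumes infG: "infinite (G I)" and nz: "(0::'r::comm_ring_1) \<noteq> 1"
  shows "w_inv D I al cal (looijenga D I cal :: (('d\<Rightarrow>int)\<Rightarrow>'r) set) \<noteq> w_inv D I al cal (group_alg D)"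
proof -
  obtain l where l: "l \<in> lat D" "\<forall>i\<in>I. 1 \<le> pair D (al i) l"
    using regular_exists[OF finI finD al_lat free_al] by blast
  have dom: "\<forall>i\<in>I. 0 \<le> pair D (al i) l" using l(2) by force
  define Orb where "Orb = (\<lambda>g. g l) ` G I"
  have infO: "infinite Orb" unfolding Orb_def using orbit_inj[OF l(2)] infG finite_image_iff by blast
  define f :: "('d\<Rightarrow>int)\<Rightarrow>'r" where "f x = (if x \<in> Orb then 1 else 0)" for x
  have suppf: "supp f = Orb" using nz by (auto simp: supp_def f_def)
  have Olat: "Orb \<subseteq> lat D" unfolding Orb_def using G_lat l(1) by auto
  have af: "almost_finite D I cal Orb"
    unfolding almost_finite_def
  proof (intro exI[of _ "{l}"] conjI ballI)
    fix e assume "e \<in> Orb"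
    then obtain g where g: "g \<in> G I" "e = g l" unfolding Orb_def by blast
    then have "pos (l - e)" using dom_le[OF dom] by simp
    then show "\<exists>j\<in>{l}. leQ I cal e j" using leQ_lc unfolding pos_def by blast
  qed (use l in auto)
  have inv: "\<forall>w\<in>weyl D I al cal. \<forall>x\<in>lat D. f (w x) = f x"
  proof (intro ballI)
    fix w x assume w: "w \<in> weyl D I al cal" and x: "x \<in> lat D"
    obtain h where h: "h \<in> G I" "w = restr h" using w weyl_eq by blast
    have wx: "w x = h x" using h x by (simp add: restr_def)
    obtain h' where h': "h' \<in> G I" "\<forall>y. h' (h y) = y" using G_inv[OF h(1)] by blast
    have "h x \<in> Orb \<longleftrightarrow> x \<in> Orb"
    proof
      assume "h x \<in> Orb"
      then obtain g where "g \<in> G I" "h x = g l" unfolding Orb_def by blast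
      then have "x = (h' \<circ> g) l" "h' \<circ> g \<in> G I" using h' G_comp by (metis comp_apply)+
      then show "x \<in> Orb" unfolding Orb_def by blast
    next
      assume "x \<in> Orb"
      then obtain g where "g \<in> G I" "x = g l" unfolding Orb_def by blast
      then have "h x = (h \<circ> g) l" "h \<circ> g \<in> G I" using h G_comp by auto
      then show "h x \<in> Orb" unfolding Orb_def by blast
    qed
    then show "f (w x) = f x" using wx by (simp add: f_def)
  qed
  have "f \<in> w_inv D I al cal (looijenga D I cal)"
    unfolding w_inv_def looijenga_def using suppf Olat af inv by auto
  moreover have "f \<notin> w_inv D I al cal (group_alg D)"
    unfolding w_inv_def group_alg_def using suppf infO by auto
  ultimately show ?thesis by blast
qed

end

theorem mainTheorem14:
  fixes D :: "'d set" and I :: "'i set"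
    and al cal :: "'i \<Rightarrow> 'd \<Rightarrow> int"
  assumes "finite D" and "finite I"
    and "\<forall>i\<in>I. al i \<in> lat D" and "\<forall>i\<in>I. cal i \<in> lat D"
    and "free_family I al" and "free_family I cal"
    and "gen_cartan I (\<lambda>i j. pair D (al j) (cal i))"
    and "(0::'r::comm_ring_1) \<noteq> 1"
  shows "(w_inv D I al cal (looijenga D I cal :: (('d \<Rightarrow> int) \<Rightarrow> 'r) set)
            = w_inv D I al cal (group_alg D))
         \<longleftrightarrow> finite (weyl D I al cal)"
proof -
  interpret K: KM D I al cal by unfold_locales (use assms in auto)
  show ?thesis using K.finite_weyl_G K.dir1' K.dir2[OF _ assms(8)] by blast
qed


end
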